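(* Assume status quo bias: $f_1(x,y)\ge f_0(x,y)$ for all $x,y\in[0,1]$. Let $f(\pi)=\pi f_1(0,\pi)+(1-\pi)f_0(0,\pi)$ be a $k$-equilibrium discrete-time (resp. continuous-time) dynamics with stable equilibria $\pi^{\mathfrak e}_1\le\dots\le\pi^{\mathfrak e}_k$ and delimiting points $\delta_1,\dots,\delta_{k-1}$, and suppose that for each $i\in\{1,\dots,k\}$ there exist $r_i>0$ and $L_i\in[0,1)$ with $f'(\pi)\le L_i$ for all $\pi\in[\pi^{\mathfrak e}_i-r_i,\pi^{\mathfrak e}_i+r_i]\cap[0,1]$. Let $j$ be the initially advantaged group ($\pi_0(1|j)\ge\pi_0(1|\neg j)$) and suppose $\pi_0(1|\neg j)\neq\delta_i$ for all $i\in\{1,\dots,k-1\}$. Then applying the AA1 policy at all times reaches equality in discrete time (resp. continuous time): $|\pi_t(1|A)-\pi_t(1|B)|\to0$ as $t\to\infty$.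
   Context: Two groups $A,B$; $\neg j$ is the other group. Group $j$ has qualification profile $\pi_t(1|j)\in[0,1]$. Selection rates $\beta_t(v;j)=\tau(v;j)\pi_t(v|j)$. Dynamics: continuously differentiable $f_0,f_1:[0,1]^2\to[0,1]$; discrete time $\pi_{t+1}(1|j)=\pi_t(1|j)f_1(\beta_t(0;j),\beta_t(1;j))+(1-\pi_t(1|j))f_0(\beta_t(0;j),\beta_t(1;j))$; continuous time $\frac{d}{dt}\pi_t(1|j)=\pi_t(1|j)(f_1(\beta_t(0;j),\beta_t(1;j))-1)+(1-\pi_t(1|j))f_0(\beta_t(0;j),\beta_t(1;j))$. Under the unconstrained policy (selection rates $(0,\pi)$) each group follows $\pi_{t+1}=f(\pi_t)$ (DT) or $\dot\pi=f(\pi)-\pi$ (CT). Definition: $f$ is a $k$-equilibrium DT (resp. CT) dynamics if it is continuously differentiable and has fixed points $\pi^{\mathfrak e}_1\le\dots\le\pi^{\mathfrak e}_k$ and fixed points $\delta_i\in(\pi^{\mathfrak e}_i,\pi^{\mathfrak e}_{i+1})$, $i=1,\dots,k-1$, such that, with basins $I_1=[0,\delta_1)$, $I_i=(\delta_{i-1},\delta_i)$ for $1<i<k$, $I_k=(\delta_{k-1},1]$ (and $I_1=[0,1]$ if $k=1$), every $\pi_0\in I_i$ yields $\pi_t\to\pi^{\mathfrak e}_i$ as $t\to\infty$, where $\pi_t=f^t(\pi_0)$ (DT) or $\pi_t$ solves $\dot\pi=f(\pi)-\pi$ from $\pi_0$ (CT). Group $j$ is advantaged at $t$ if $\pi_t(1|j)\ge\pi_t(1|\neg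 j)$. AA1 w.r.t. advantaged $j$: $\tau(1;j)=\pi_t(1|\neg j)/\pi_t(1|j)$, $\tau(0;j)=0$, $\tau(1;\neg j)=1$, $\tau(0;\neg j)=0$, i.e. selection rates $\beta_t(0;\cdot)=0$, $\beta_t(1;\cdot)=\pi_t(1|\neg j)$ for both groups; "applied at all times" means w.r.t. the group advantaged at the current time. *)

theory Defs
  imports "HOL-Analysis.Analysis"
begin

definition unit_square :: "(real \<times> real) set" where
  "unit_square = {0..1} \<times> {0..1}"

definition C1_on_square :: "(real \<Rightarrow> real \<Rightarrow> real) \<Rightarrow> bool" where
  "C1_on_square g \<longleftrightarrow>
     (\<exists>D :: (real \<times> real) \<Rightarrow> ((real \<times> real) \<Rightarrow>\<^sub>L real).
        (\<forall>z\<in>unit_square. ((\<lambda>w. g (fst w) (snd w)) has_derivative blinfun_apply (D z)) (at z within unit_square))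
        \<and> continuous_on unit_square D)"

definition admissible_transition :: "(real \<Rightarrow> real \<Rightarrow> real) \<Rightarrow> bool" where
  "admissible_transition g \<longleftrightarrow>
     (\<forall>x\<in>{0..1}. \<forall>y\<in>{0..1}. g x y \<in> {0..1}) \<and> C1_on_square g"

text \<open>One-step update of a qualification profile p under selection rates (b0,b1).\<close>
definition upd :: "(real \<Rightarrow> real \<Rightarrow> real) \<Rightarrow> (real \<Rightarrow> real \<Rightarrow> real) \<Rightarrow> real \<Rightarrow> real \<Rightarrow> real \<Rightarrow> real" where
  "upd f0 f1 p b0 b1 = p * f1 b0 b1 + (1 - p) * f0 b0 b1"

definition ct_rhs :: "(real \<Rightarrow> real \<Rightarrow> real) \<Rightarrow> (real \<Rightarrow> real \<Rightarrow> real) \<Rightarrow> real \<Rightarrow> real \<Rightarrow> real \<Rightarrow> real" where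
  "ct_rhs f0 f1 p b0 b1 = p * (f1 b0 b1 - 1) + (1 - p) * f0 b0 b1"

definition fdyn :: "(real \<Rightarrow> real \<Rightarrow> real) \<Rightarrow> (real \<Rightarrow> real \<Rightarrow> real) \<Rightarrow> real \<Rightarrow> real" where
  "fdyn f0 f1 \<pi> = \<pi> * f1 0 \<pi> + (1 - \<pi>) * f0 0 \<pi>"

definition C1_on_unit :: "(real \<Rightarrow> real) \<Rightarrow> bool" where
  "C1_on_unit f \<longleftrightarrow> (\<exists>f'. (\<forall>x\<in>{0..1}. (f has_real_derivative f' x) (at x within {0..1}))
                          \<and> continuous_on {0..1} f')"

text \<open>Basin I_i (indices 1..k; delimiting points \<delta> 1 .. \<delta> (k-1)):
  I_1 = [0,\<delta>_1), I_i = (\<delta>_{i-1},\<delta>_i), I_k = (\<delta>_{k-1},1], and I_1 = [0,1] if k = 1.\<close>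
definition basin :: "nat \<Rightarrow> (nat \<Rightarrow> real) \<Rightarrow> nat \<Rightarrow> real set" where
  "basin k \<delta> i = {\<pi>\<in>{0..1}. (1 < i \<longrightarrow> \<delta> (i - 1) < \<pi>) \<and> (i < k \<longrightarrow> \<pi> < \<delta> i)}"

definition k_eq_structure :: "(real \<Rightarrow> real) \<Rightarrow> nat \<Rightarrow> (nat \<Rightarrow> real) \<Rightarrow> (nat \<Rightarrow> real) \<Rightarrow> bool" where
  "k_eq_structure f k pe \<delta> \<longleftrightarrow>
     1 \<le> k \<and> C1_on_unit f
     \<and> (\<forall>i\<in>{1..k}. pe i \<in> {0..1} \<and> f (pe i) = pe i)
     \<and> (\<forall>i\<in>{1..<k}. pe i \<le> pe (Suc i))
     \<and> (\<forall>i\<in>{1..<k}. \<delta> i \<in> {pe i<..<pe (Suc i)} \<and> f (\<delta> i) = \<delta> i)"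

definition k_equilibrium_DT :: "(real \<Rightarrow> real) \<Rightarrow> nat \<Rightarrow> (nat \<Rightarrow> real) \<Rightarrow> (nat \<Rightarrow> real) \<Rightarrow> bool" where
  "k_equilibrium_DT f k pe \<delta> \<longleftrightarrow>
     k_eq_structure f k pe \<delta>
     \<and> (\<forall>i\<in>{1..k}. \<forall>\<pi>0\<in>basin k \<delta> i. (\<lambda>t. (f ^^ t) \<pi>0) \<longlonglongrightarrow> pe i)"

definition ct_solution :: "(real \<Rightarrow> real) \<Rightarrow> real \<Rightarrow> (real \<Rightarrow> real) \<Rightarrow> bool" where
  "ct_solution f \<pi>0 p \<longleftrightarrow> p 0 = \<pi>0 \<and> (\<forall>t\<ge>0. p t \<in> {0..1}
      \<and> (p has_real_derivative (f (p t) - p t)) (at t within {0..}))"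

definition k_equilibrium_CT :: "(real \<Rightarrow> real) \<Rightarrow> nat \<Rightarrow> (nat \<Rightarrow> real) \<Rightarrow> (nat \<Rightarrow> real) \<Rightarrow> bool" where
  "k_equilibrium_CT f k pe \<delta> \<longleftrightarrow>
     k_eq_structure f k pe \<delta>
     \<and> (\<forall>i\<in>{1..k}. \<forall>\<pi>0\<in>basin k \<delta> i. \<forall>p. ct_solution f \<pi>0 p \<longrightarrow> (p \<longlongrightarrow> pe i) at_top)"

text \<open>AA1 selection rate on qualified individuals, for profiles a (group A) and b (group B):
  it equals the profile of the currently disadvantaged group (both groups get this rate,
  and rate 0 on unqualified individuals).\<close>
definition aa1_rate :: "real \<Rightarrow> real \<Rightarrow> real" where
  "aa1_rate a b = (if a \<ge> b then b else a)"

fun aa1_DT :: "(real \<Rightarrow> real \<Rightarrow> real) \<Rightarrow> (real \<Rightarrow> real \<Rightarrow> real) \<Rightarrow> real \<Rightarrow> real \<Rightarrow> nat \<Rightarrow> real \<times> real" where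
  "aa1_DT f0 f1 a0 b0 0 = (a0, b0)"
| "aa1_DT f0 f1 a0 b0 (Suc t) =
     (let (a, b) = aa1_DT f0 f1 a0 b0 t; m = aa1_rate a b
      in (upd f0 f1 a 0 m, upd f0 f1 b 0 m))"

definition aa1_CT_solution :: "(real \<Rightarrow> real \<Rightarrow> real) \<Rightarrow> (real \<Rightarrow> real \<Rightarrow> real) \<Rightarrow> real \<Rightarrow> real
    \<Rightarrow> (real \<Rightarrow> real) \<Rightarrow> (real \<Rightarrow> real) \<Rightarrow> bool" where
  "aa1_CT_solution f0 f1 a0 b0 pA pB \<longleftrightarrow> pA 0 = a0 \<and> pB 0 = b0 \<and>
     (\<forall>t\<ge>0. pA t \<in> {0..1} \<and> pB t \<in> {0..1}
       \<and> (pA has_real_derivative ct_rhs f0 f1 (pA t) 0 (aa1_rate (pA t) (pB t))) (at t within {0..})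
       \<and> (pB has_real_derivative ct_rhs f0 f1 (pB t) 0 (aa1_rate (pA t) (pB t))) (at t within {0..}))"

end

theory Submission imports Defs "HOL-Real_Asymp.Real_Asymp" begin

lemma slice_deriv:
  assumes "C1_on_square h" "p \<in> {0..1}"
  shows "\<exists>D. ((\<lambda>y. h 0 y) has_real_derivative D) (at p within {0..1})"
proof -
  obtain Dm :: "(real \<times> real) \<Rightarrow> ((real \<times> real) \<Rightarrow>\<^sub>L real)" where
    Dm: "\<forall>z\<in>unit_square. ((\<lambda>w. h (fst w) (snd w)) has_derivative blinfun_apply (Dm z)) (at z within unit_square)"
    using assms(1) unfolding C1_on_square_def by blast
  have pd: "((\<lambda>y. (0::real, y)) has_derivative (\<lambda>y. (0, y))) (at p within {0..1})"
    by (auto intro!: derivative_eq_intros)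
  have img: "(\<lambda>y. (0::real, y)) ` {0..1} \<subseteq> unit_square" by (auto simp: unit_square_def)
  have "((\<lambda>y. h (fst (0::real, y)) (snd (0::real, y))) has_derivative (\<lambda>u. Dm (0,p) (0,u))) (at p within {0..1})"
    using has_derivative_in_compose2[OF _ img assms(2) pd, of "\<lambda>w. h (fst w) (snd w)" "\<lambda>z. blinfun_apply (Dm z)"] Dm
    by auto
  moreover have "(\<lambda>u. Dm (0,p) (0,u)) = (*) (Dm (0,p) (0,1))"
  proof
    fix u :: real
    have "(0::real, u) = u *\<^sub>R (0, 1)" by simp
    then show "Dm (0,p) (0,u) = Dm (0,p) (0,1) * u"
      by (metis blinfun.scaleR_right mult.commute real_scaleR_def)
  qed
  ultimately show ?thesis unfolding has_field_derivative_def by auto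
qed

lemma sign_right:
  assumes "(\<phi> has_real_derivative D) (at x within {0..1})" "0 \<le> x" "x < 1"
    "\<forall>y\<in>{0..1}. \<phi> x \<le> \<phi> y"
  shows "D \<ge> 0"
proof -
  have "(\<phi> has_real_derivative D) (at x within {x..1})"
    using assms(1) by (rule DERIV_subset) (use assms in auto)
  then have "((\<lambda>y. (\<phi> y - \<phi> x) / (y - x)) \<longlongrightarrow> D) (at_right x)"
    using at_within_Icc_at_right[OF assms(3)] has_field_derivative_iff by metis
  moreover have "eventually (\<lambda>y. (\<phi> y - \<phi> x) / (y - x) \<ge> 0) (at_right x)"
    unfolding eventually_at_right_field using assms
    by (intro exI[of _ 1]) (auto intro!: divide_nonneg_pos)
  ultimately show ?thesis
    using tendsto_lowerbound trivial_limit_at_right_real by blast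
qed

lemma sign_left:
  assumes "(\<phi> has_real_derivative D) (at x within {0..1})" "0 < x" "x \<le> 1"
    "\<forall>y\<in>{0..1}. \<phi> y \<le> \<phi> x"
  shows "D \<ge> 0"
proof -
  have "(\<phi> has_real_derivative D) (at x within {0..x})"
    using assms(1) by (rule DERIV_subset) (use assms in auto)
  then have "((\<lambda>y. (\<phi> y - \<phi> x) / (y - x)) \<longlongrightarrow> D) (at_left x)"
    using at_within_Icc_at_left[OF assms(2)] has_field_derivative_iff by metis
  moreover have "eventually (\<lambda>y. (\<phi> y - \<phi> x) / (y - x) \<ge> 0) (at_left x)"
    unfolding eventually_at_left_field using assms
    by (intro exI[of _ 0]) (auto intro!: divide_nonpos_neg)
  ultimately show ?thesis
    using tendsto_lowerbound trivial_limit_at_left_real by blast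
qed

lemma g_lt1:
  assumes f0_adm: "admissible_transition f0" and f1_adm: "admissible_transition f1"
    and p: "p \<in> {0..1}" and L: "L < 1"
    and db: "\<forall>d. (fdyn f0 f1 has_real_derivative d) (at p within {0..1}) \<longrightarrow> d \<le> L"
  shows "f1 0 p - f0 0 p < 1"
proof (rule ccontr)
  assume "\<not> ?thesis"
  moreover have r0: "\<forall>y\<in>{0..1}. f0 0 y \<in> {0..1}" and r1: "\<forall>y\<in>{0..1}. f1 0 y \<in> {0..1}"
    using f0_adm f1_adm unfolding admissible_transition_def by auto
  ultimately have e1: "f1 0 p = 1" and e0: "f0 0 p = 0" using p by fastforce+
  obtain D0 where D0: "((\<lambda>y. f0 0 y) has_real_derivative D0) (at p within {0..1})"
    using slice_deriv f0_adm p unfolding admissible_transition_def by blast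
  obtain D1 where D1: "((\<lambda>y. f1 0 y) has_real_derivative D1) (at p within {0..1})"
    using slice_deriv f1_adm p unfolding admissible_transition_def by blast
  have "(fdyn f0 f1 has_real_derivative (1 * f1 0 p + p * D1 + ((-1) * f0 0 p + (1 - p) * D0)))
          (at p within {0..1})"
    unfolding fdyn_def[abs_def]
    using DERIV_add[OF DERIV_mult[OF DERIV_ident D1] DERIV_mult[OF DERIV_diff[OF DERIV_const[of 1] DERIV_ident] D0]]
    by (simp add: algebra_simps)
  then have le: "1 * f1 0 p + p * D1 + ((-1) * f0 0 p + (1 - p) * D0) \<le> L" using db by blast
  have "p * D1 \<ge> 0"
  proof (cases "p = 0")
    case False
    then have "D1 \<ge> 0" using sign_left[OF D1] p r1 e1 by auto
    then show ?thesis using p by auto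
  qed simp
  moreover have "(1 - p) * D0 \<ge> 0"
  proof (cases "p = 1")
    case False
    then have "D0 \<ge> 0" using sign_right[OF D0] p r0 e0 by auto
    then show ?thesis using p by auto
  qed simp
  ultimately show False using le e1 e0 L by linarith
qed

lemma aa1_rate_min: "aa1_rate a b = min a b" by (auto simp: aa1_rate_def min_def)

lemma conv_range:
  fixes p x y :: real
  assumes "p \<in> {0..1}" "x \<in> {0..1}" "y \<in> {0..1}"
  shows "p * x + (1 - p) * y \<in> {0..1}"
proof -
  have "p * x \<le> p" "(1 - p) * y \<le> 1 - p" using assms by (auto intro: mult_left_le)
  moreover have "p * x \<ge> 0" "(1 - p) * y \<ge> 0" using assms by auto
  ultimately show ?thesis by auto
qed

lemma min_upd:
  assumes "f0 0 m \<le> f1 0 m"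
  shows "min (upd f0 f1 a 0 m) (upd f0 f1 b 0 m) = upd f0 f1 (min a b) 0 m"
proof -
  have e: "\<And>p. upd f0 f1 p 0 m = f0 0 m + p * (f1 0 m - f0 0 m)" by (simp add: upd_def algebra_simps)
  have g: "f1 0 m - f0 0 m \<ge> 0" using assms by simp
  show ?thesis
  proof (cases "a \<le> b")
    case True
    then have "a * (f1 0 m - f0 0 m) \<le> b * (f1 0 m - f0 0 m)" using g by (rule mult_right_mono)
    then show ?thesis using True by (simp add: min_def e)
  next
    case False
    then have "b * (f1 0 m - f0 0 m) \<le> a * (f1 0 m - f0 0 m)" using g by (intro mult_right_mono) auto
    then show ?thesis using False by (simp add: min_def e)
  qed
qed

lemma DT_conv:
  assumes R: "\<forall>y\<in>{0..1}. f0 0 y \<in> {0..1} \<and> f1 0 y \<in> {0..1} \<and> f0 0 y \<le> f1 0 y"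
    and a0: "a0 \<in> {0..1}" and b0: "b0 \<in> {0..1}"
    and conv: "(\<lambda>t. (fdyn f0 f1 ^^ t) (min a0 b0)) \<longlonglongrightarrow> q"
    and gq: "f1 0 q - f0 0 q < 1"
    and cont: "continuous (at q within {0..1}) (\<lambda>y. f1 0 y - f0 0 y)"
  shows "(\<lambda>t. \<bar>fst (aa1_DT f0 f1 a0 b0 t) - snd (aa1_DT f0 f1 a0 b0 t)\<bar>) \<longlonglongrightarrow> 0"
proof -
  define A where "A t = fst (aa1_DT f0 f1 a0 b0 t)" for t
  define B where "B t = snd (aa1_DT f0 f1 a0 b0 t)" for t
  define g where "g y = f1 0 y - f0 0 y" for y
  have stepA: "A (Suc t) = upd f0 f1 (A t) 0 (min (A t) (B t))" for t
    by (simp add: A_def B_def Let_def split_beta aa1_rate_min)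
  have stepB: "B (Suc t) = upd f0 f1 (B t) 0 (min (A t) (B t))" for t
    by (simp add: A_def B_def Let_def split_beta aa1_rate_min)
  have rng: "A t \<in> {0..1} \<and> B t \<in> {0..1}" for t
  proof (induction t)
    case 0 then show ?case using a0 b0 by (simp add: A_def B_def)
  next
    case (Suc t)
    then have m: "min (A t) (B t) \<in> {0..1}" by (auto simp: min_def)
    then have "f0 0 (min (A t) (B t)) \<in> {0..1}" "f1 0 (min (A t) (B t)) \<in> {0..1}" using R by auto
    then show ?case unfolding stepA stepB upd_def using Suc
      by (intro conjI conv_range) auto
  qed
  have Mstep: "min (A (Suc t)) (B (Suc t)) = fdyn f0 f1 (min (A t) (B t))" for t
  proof -
    have m: "min (A t) (B t) \<in> {0..1}" using rng[of t] by (auto simp: min_def)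
    show ?thesis unfolding stepA stepB
      by (subst min_upd) (use R m in \<open>auto simp: upd_def fdyn_def\<close>)
  qed
  have M: "min (A t) (B t) = (fdyn f0 f1 ^^ t) (min a0 b0)" for t
  proof (induction t)
    case 0 then show ?case by (simp add: A_def B_def)
  next
    case (Suc t) then show ?case using Mstep[of t] by simp
  qed
  have Mr: "min (A t) (B t) \<in> {0..1}" for t using rng[of t] by (auto simp: min_def)
  have dstep: "\<bar>A (Suc t) - B (Suc t)\<bar> = \<bar>A t - B t\<bar> * g (min (A t) (B t))" for t
  proof -
    have "A (Suc t) - B (Suc t) = (A t - B t) * g (min (A t) (B t))"
      unfolding stepA stepB upd_def g_def by (simp add: algebra_simps)
    moreover have "g (min (A t) (B t)) \<ge> 0" using R Mr[of t] by (auto simp: g_def)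
    ultimately show ?thesis by (simp add: abs_mult)
  qed
  have Gt: "(\<lambda>t. g (min (A t) (B t))) \<longlonglongrightarrow> g q"
    unfolding M g_def
    by (rule continuous_within_tendsto_compose[OF cont _ conv]) (use Mr M in auto)
  define c where "c = (1 + g q) / 2"
  have cl: "g q < c" "c < 1" using gq by (auto simp: c_def g_def)
  have gq0: "g q \<ge> 0"
  proof -
    have "\<forall>t. g (min (A t) (B t)) \<ge> 0" using R Mr by (auto simp: g_def)
    then show ?thesis using tendsto_lowerbound[OF Gt] by auto
  qed
  obtain N where N: "\<forall>t\<ge>N. g (min (A t) (B t)) < c"
    using order_tendstoD(2)[OF Gt cl(1)] unfolding eventually_sequentially by blast
  have bound: "\<bar>A (n + N) - B (n + N)\<bar> \<le> \<bar>A N - B N\<bar> * c ^ n" for n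
  proof (induction n)
    case 0 then show ?case by simp
  next
    case (Suc n)
    have "\<bar>A (Suc n + N) - B (Suc n + N)\<bar> = \<bar>A (n + N) - B (n + N)\<bar> * g (min (A (n+N)) (B (n+N)))"
      using dstep[of "n + N"] by simp
    also have "\<dots> \<le> \<bar>A (n + N) - B (n + N)\<bar> * c"
      using N[rule_format, of "n + N"] by (intro mult_left_mono) auto
    also have "\<dots> \<le> \<bar>A N - B N\<bar> * c ^ n * c"
      using Suc cl gq0 by (intro mult_right_mono) auto
    finally show ?case by (simp add: mult.assoc mult.commute)
  qed
  have "(\<lambda>n. \<bar>A N - B N\<bar> * c ^ n) \<longlonglongrightarrow> 0"
    using cl gq0 by (intro tendsto_mult_right_zero LIMSEQ_power_zero) auto
  then have "(\<lambda>n. \<bar>A (n + N) - B (n + N)\<bar>) \<longlonglongrightarrow> 0"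
    by (rule Lim_null_comparison[rotated]) (use bound in auto)
  then show ?thesis unfolding A_def B_def by (rule LIMSEQ_offset)
qed

lemma CT_conv:
  assumes R: "\<forall>y\<in>{0..1}. f0 0 y \<in> {0..1} \<and> f1 0 y \<in> {0..1} \<and> f0 0 y \<le> f1 0 y"
    and sol: "\<forall>t\<ge>0. pU t \<in> {0..1} \<and> pL t \<in> {0..1}
       \<and> (pU has_real_derivative ct_rhs f0 f1 (pU t) 0 (min (pU t) (pL t))) (at t within {0..})
       \<and> (pL has_real_derivative ct_rhs f0 f1 (pL t) 0 (min (pU t) (pL t))) (at t within {0..})"
    and init: "pL 0 \<le> pU 0"
    and conv: "\<forall>p. ct_solution (fdyn f0 f1) (pL 0) p \<longrightarrow> (p \<longlongrightarrow> q) at_top"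
    and gq: "f1 0 q - f0 0 q < 1"
    and cont: "continuous (at q within {0..1}) (\<lambda>y. f1 0 y - f0 0 y)"
  shows "((\<lambda>t. \<bar>pU t - pL t\<bar>) \<longlongrightarrow> 0) at_top"
proof -
  define g where "g y = f1 0 y - f0 0 y" for y
  define D where "D t = pU t - pL t" for t
  define Dv where "Dv t = D t * (g (min (pU t) (pL t)) - 1)" for t
  have Dd: "(D has_real_derivative Dv t) (at t within {0..})" if "t \<ge> 0" for t
  proof -
    have "(D has_real_derivative (ct_rhs f0 f1 (pU t) 0 (min (pU t) (pL t)) - ct_rhs f0 f1 (pL t) 0 (min (pU t) (pL t)))) (at t within {0..})"
      unfolding D_def[abs_def] using sol that by (intro DERIV_diff) auto
    moreover have "ct_rhs f0 f1 (pU t) 0 (min (pU t) (pL t)) - ct_rhs f0 f1 (pL t) 0 (min (pU t) (pL t)) = Dv t"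
      by (simp add: ct_rhs_def Dv_def D_def g_def algebra_simps)
    ultimately show ?thesis by simp
  qed
  have gr: "g (min (pU t) (pL t)) \<in> {0..1}" if "t \<ge> 0" for t
  proof -
    have m: "min (pU t) (pL t) \<in> {0..1}" using sol that by (auto simp: min_def)
    show ?thesis using R[rule_format, OF m] by (auto simp: g_def)
  qed
  have Dcont: "continuous_on {0..} D"
    using Dd by (intro has_derivative_continuous_on) (auto simp: has_field_derivative_def)
  have deriv_sub: "(D has_derivative (\<lambda>h. Dv x * h)) (at x within {a..b})" if "0 \<le> a" "a \<le> x" "x \<le> b" for a b x
  proof -
    have "(D has_real_derivative Dv x) (at x within {a..b})"
      using Dd[of x] that by (rule_tac DERIV_subset) auto
    then show ?thesis by (simp add: has_field_derivative_def)
  qed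
  have nonneg: "D t \<ge> 0" if "t \<ge> 0" for t
  proof (rule ccontr)
    assume neg: "\<not> D t \<ge> 0"
    define S where "S = {0..t} \<inter> D -` {0..}"
    have "closed S" unfolding S_def
      by (rule continuous_closed_preimage) (auto intro: continuous_on_subset[OF Dcont])
    moreover have "0 \<in> S" using init that by (auto simp: S_def D_def)
    moreover have bdd: "bdd_above S" by (auto simp: S_def bdd_above_def)
    ultimately have sS: "Sup S \<in> S" using closed_contains_Sup by blast
    define s where "s = Sup S"
    have s: "0 \<le> s" "s \<le> t" "D s \<ge> 0" using sS by (auto simp: S_def s_def)
    then have st: "s < t" using neg by (cases "s = t") auto
    have after: "D x < 0" if "s < x" "x \<le> t" for x
    proof (rule ccontr)
      assume "\<not> D x < 0"
      then have "x \<in> S" using that s by (auto simp: S_def)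
      then have "x \<le> s" unfolding s_def using bdd by (rule cSup_upper)
      then show False using that by simp
    qed
    obtain \<xi> where xi: "\<xi> \<in> {s<..<t}" "D t - D s = Dv \<xi> * (t - s)"
      using mvt_simple[OF st, of D "\<lambda>x h. Dv x * h"] deriv_sub s by auto
    have "Dv \<xi> \<ge> 0"
      unfolding Dv_def using after[of \<xi>] xi gr[of \<xi>] s by (intro mult_nonpos_nonpos) auto
    then have "Dv \<xi> * (t - s) \<ge> 0" using st by simp
    then have "D t \<ge> D s" using xi(2) by linarith
    then show False using neg s by simp
  qed
  have minL: "min (pU t) (pL t) = pL t" if "t \<ge> 0" for t
    using nonneg[OF that] by (simp add: D_def min_def)
  have "ct_solution (fdyn f0 f1) (pL 0) pL"
    unfolding ct_solution_def
  proof (intro conjI allI impI)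
    fix t :: real assume t: "t \<ge> 0"
    show "pL t \<in> {0..1}" using sol t by auto
    have "ct_rhs f0 f1 (pL t) 0 (min (pU t) (pL t)) = fdyn f0 f1 (pL t) - pL t"
      using minL[OF t] by (simp add: ct_rhs_def fdyn_def algebra_simps)
    then show "(pL has_real_derivative fdyn f0 f1 (pL t) - pL t) (at t within {0..})"
      using sol t by metis
  qed simp
  then have Lq: "(pL \<longlongrightarrow> q) at_top" using conv by blast
  have G: "((\<lambda>t. g (pL t)) \<longlongrightarrow> g q) at_top"
    unfolding g_def
    by (rule continuous_within_tendsto_compose[OF cont _ Lq])
       (use sol in \<open>auto simp: eventually_at_top_linorder intro!: exI[of _ 0]\<close>)
  define \<eta> where "\<eta> = (1 - g q) / 2"
  have eta: "\<eta> > 0" "g q < 1 - \<eta>" using gq by (auto simp: \<eta>_def g_def field_simps)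
  obtain T0 where T0: "\<forall>t\<ge>T0. g (pL t) < 1 - \<eta>"
    using order_tendstoD(2)[OF G eta(2)] unfolding eventually_at_top_linorder by blast
  define T where "T = max T0 0"
  have T: "T \<ge> 0" "\<forall>t\<ge>T. g (pL t) < 1 - \<eta>" using T0 by (auto simp: T_def)
  define E where "E t = D t * exp (\<eta> * t)" for t
  have Edec: "E t \<le> E T" if "t \<ge> T" for t
  proof (cases "t = T")
    case False
    then have Tt: "T < t" using that by simp
    define Ev where "Ev x = Dv x * exp (\<eta> * x) + D x * (exp (\<eta> * x) * \<eta>)" for x
    have Ed: "(E has_derivative (\<lambda>h. Ev x * h)) (at x within {T..t})" if "T \<le> x" "x \<le> t" for x
    proof -
      have "(D has_real_derivative Dv x) (at x within {T..t})"
        using deriv_sub[of T x t] that T by (simp add: has_field_derivative_def)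
      then have "(E has_real_derivative Ev x) (at x within {T..t})"
        unfolding E_def[abs_def] Ev_def
        by (auto intro!: derivative_eq_intros)
      then show ?thesis by (simp add: has_field_derivative_def)
    qed
    obtain \<xi> where xi: "\<xi> \<in> {T<..<t}" "E t - E T = Ev \<xi> * (t - T)"
      using mvt_simple[OF Tt, of E "\<lambda>x h. Ev x * h"] Ed by auto
    have "Ev \<xi> = D \<xi> * exp (\<eta> * \<xi>) * (g (pL \<xi>) - 1 + \<eta>)"
      using minL[of \<xi>] xi T by (simp add: Ev_def Dv_def algebra_simps)
    moreover have "D \<xi> * exp (\<eta> * \<xi>) \<ge> 0" using nonneg[of \<xi>] xi T by simp
    moreover have "g (pL \<xi>) - 1 + \<eta> < 0" using T(2)[rule_format, of \<xi>] xi by simp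
    ultimately have "Ev \<xi> \<le> 0" by (simp add: mult_nonneg_nonpos)
    then have "Ev \<xi> * (t - T) \<le> 0" using Tt by (simp add: mult_nonpos_nonneg)
    then show ?thesis using xi(2) by linarith
  qed simp
  have bnd: "norm \<bar>pU t - pL t\<bar> \<le> E T * exp (- \<eta> * t)" if "t \<ge> T" for t
  proof -
    have "D t = E t * exp (- \<eta> * t)" by (simp add: E_def mult.assoc flip: exp_add)
    also have "\<dots> \<le> E T * exp (- \<eta> * t)" using Edec[OF that] by simp
    finally show ?thesis using nonneg[of t] that T by (simp add: D_def)
  qed
  have "((\<lambda>t. E T * exp (- \<eta> * t)) \<longlongrightarrow> 0) at_top" using eta(1) by real_asymp
  then show ?thesis
    by (rule Lim_null_comparison[rotated]) (use bnd in \<open>auto simp: eventually_at_top_linorder\<close>)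
qed

theorem mainTheorem11:
  fixes f0 f1 :: "real \<Rightarrow> real \<Rightarrow> real"
    and k :: nat and pe \<delta> r L :: "nat \<Rightarrow> real" and a0 b0 :: real
  assumes f0_adm: "admissible_transition f0"
    and f1_adm: "admissible_transition f1"
    and status_quo: "\<forall>x\<in>{0..1}. \<forall>y\<in>{0..1}. f1 x y \<ge> f0 x y"
    and r_pos: "\<forall>i\<in>{1..k}. r i > 0"
    and L_range: "\<forall>i\<in>{1..k}. 0 \<le> L i \<and> L i < 1"
    and deriv_bound: "\<forall>i\<in>{1..k}. \<forall>\<pi>\<in>{pe i - r i..pe i + r i} \<inter> {0..1}. \<forall>d.
                        (fdyn f0 f1 has_real_derivative d) (at \<pi> within {0..1}) \<longrightarrow> d \<le> L i"
    and a0_range: "a0 \<in> {0..1}" and b0_range: "b0 \<in> {0..1}"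
    and not_delim: "\<forall>i\<in>{1..<k}. aa1_rate a0 b0 \<noteq> \<delta> i"
  shows "(k_equilibrium_DT (fdyn f0 f1) k pe \<delta> \<longrightarrow>
            (\<lambda>t. \<bar>fst (aa1_DT f0 f1 a0 b0 t) - snd (aa1_DT f0 f1 a0 b0 t)\<bar>) \<longlonglongrightarrow> 0)
       \<and> (k_equilibrium_CT (fdyn f0 f1) k pe \<delta> \<longrightarrow>
            (\<forall>pA pB. aa1_CT_solution f0 f1 a0 b0 pA pB \<longrightarrow>
               ((\<lambda>t. \<bar>pA t - pB t\<bar>) \<longlongrightarrow> 0) at_top))"
proof -
  have R: "\<forall>y\<in>{0..1}. f0 0 y \<in> {0..1} \<and> f1 0 y \<in> {0..1} \<and> f0 0 y \<le> f1 0 y"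
    using f0_adm f1_adm status_quo unfolding admissible_transition_def by auto
  define m0 where "m0 = min a0 b0"
  have m0r: "m0 \<in> {0..1}" using a0_range b0_range by (auto simp: m0_def min_def)
  have basin_ex: "\<exists>i\<in>{1..k}. m0 \<in> basin k \<delta> i" if k1: "1 \<le> k"
  proof -
    define P where "P j = (1 \<le> j \<and> (j < k \<longrightarrow> m0 < \<delta> j))" for j
    define i where "i = (LEAST j. P j)"
    have Pk: "P k" using k1 by (simp add: P_def)
    have Pi: "P i" unfolding i_def using Pk by (rule LeastI)
    have ik: "i \<le> k" unfolding i_def using Pk by (rule Least_le)
    have "\<delta> (i - 1) < m0" if "1 < i"
    proof -
      have "\<not> P (i - 1)" unfolding i_def by (rule not_less_Least) (use that in \<open>simp add: i_def\<close>)
      then have "\<not> m0 < \<delta> (i - 1)" using that ik by (simp add: P_def)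
      moreover have "i - 1 \<in> {1..<k}" using that ik by auto
      then have "aa1_rate a0 b0 \<noteq> \<delta> (i - 1)" using not_delim by blast
      moreover have "aa1_rate a0 b0 = m0" by (simp add: aa1_rate_min m0_def)
      ultimately show ?thesis by linarith
    qed
    then have "m0 \<in> basin k \<delta> i" using Pi m0r by (auto simp: basin_def P_def)
    then show ?thesis using Pi ik by (auto simp: P_def)
  qed
  have key: "f1 0 (pe i) - f0 0 (pe i) < 1 \<and> continuous (at (pe i) within {0..1}) (\<lambda>y. f1 0 y - f0 0 y)"
    if ks: "k_eq_structure (fdyn f0 f1) k pe \<delta>" and i: "i \<in> {1..k}" for i
  proof
    have pr: "pe i \<in> {0..1}" using ks i by (auto simp: k_eq_structure_def)
    have "pe i \<in> {pe i - r i..pe i + r i} \<inter> {0..1}" using pr r_pos[rule_format, OF i] by simp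
    then show "f1 0 (pe i) - f0 0 (pe i) < 1"
      using g_lt1[OF f0_adm f1_adm pr, of "L i"] L_range deriv_bound i by blast
    obtain D0 where D0: "((\<lambda>y. f0 0 y) has_real_derivative D0) (at (pe i) within {0..1})"
      using slice_deriv f0_adm pr unfolding admissible_transition_def by blast
    obtain D1 where D1: "((\<lambda>y. f1 0 y) has_real_derivative D1) (at (pe i) within {0..1})"
      using slice_deriv f1_adm pr unfolding admissible_transition_def by blast
    show "continuous (at (pe i) within {0..1}) (\<lambda>y. f1 0 y - f0 0 y)"
      using D0 D1 by (intro continuous_diff has_derivative_continuous) (auto simp: has_field_derivative_def)
  qed
  show ?thesis
  proof (intro conjI impI allI)
    assume KD: "k_equilibrium_DT (fdyn f0 f1) k pe \<delta>"
    then have ks: "k_eq_structure (fdyn f0 f1) k pe \<delta>" by (simp add: k_equilibrium_DT_def)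
    then obtain i where i: "i \<in> {1..k}" "m0 \<in> basin k \<delta> i" using basin_ex by (auto simp: k_eq_structure_def)
    have conv: "(\<lambda>t. (fdyn f0 f1 ^^ t) (min a0 b0)) \<longlonglongrightarrow> pe i"
      using KD i unfolding k_equilibrium_DT_def m0_def by blast
    show "(\<lambda>t. \<bar>fst (aa1_DT f0 f1 a0 b0 t) - snd (aa1_DT f0 f1 a0 b0 t)\<bar>) \<longlonglongrightarrow> 0"
      using DT_conv[OF R a0_range b0_range conv] key[OF ks i(1)] by blast
  next
    fix pA pB
    assume KC: "k_equilibrium_CT (fdyn f0 f1) k pe \<delta>" and sol: "aa1_CT_solution f0 f1 a0 b0 pA pB"
    then have ks: "k_eq_structure (fdyn f0 f1) k pe \<delta>" by (simp add: k_equilibrium_CT_def)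
    then obtain i where i: "i \<in> {1..k}" "m0 \<in> basin k \<delta> i" using basin_ex by (auto simp: k_eq_structure_def)
    have conv: "\<forall>p. ct_solution (fdyn f0 f1) m0 p \<longrightarrow> (p \<longlongrightarrow> pe i) at_top"
      using KC i unfolding k_equilibrium_CT_def by blast
    show "((\<lambda>t. \<bar>pA t - pB t\<bar>) \<longlongrightarrow> 0) at_top"
    proof (cases "b0 \<le> a0")
      case True
      have "pB 0 = m0" using sol True by (simp add: aa1_CT_solution_def m0_def)
      then show ?thesis
        using CT_conv[of f0 f1 pA pB "pe i", OF R] sol True conv key[OF ks i(1)]
        by (auto simp: aa1_CT_solution_def aa1_rate_min)
    next
      case False
      have "pA 0 = m0" using sol False by (simp add: aa1_CT_solution_def m0_def)
      then have "((\<lambda>t. \<bar>pB t - pA t\<bar>) \<longlongrightarrow> 0) at_top"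
        using CT_conv[of f0 f1 pB pA "pe i", OF R] sol False conv key[OF ks i(1)]
        by (auto simp: aa1_CT_solution_def aa1_rate_min min.commute)
      then show ?thesis by (simp add: abs_minus_commute)
    qed
  qed
qed

end
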